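(* Let $m\ge2$ be an integer and let $B_m=\mathbb{Z}^m$ with componentwise addition. Define a multiplication by $(n_1,\dots,n_m)(t_1,\dots,t_m)=(w_1,\dots,w_m)$ where, for $1\le i\le m$, \[w_i=n_i+\sum_{k=0}^{i-1}\binom{n_1}{k}t_{i-k}.\] Then $(B_m,+,\cdot)$ is a left brace with $B_m^{(3)}=B_m^{m+1}=\{0\}$ and $B_m^m\neq\{0\}$; $B_m$ is generated as a left brace by $\mathbf{b}=(1,0,\dots,0)$; and for every left brace $A$ with $A^{(3)}=A^{m+1}=\{0\}$ and every $a\in A$ there exists a unique left brace homomorphism $B_m\to A$ mapping $\mathbf{b}$ to $a$, and its image is the subbrace of $A$ generated by $a$.
   Context: A left brace $(A,+,\cdot)$ is a set $A$ with two binary operations such that $(A,+)$ is an abelian group, $(A,\cdot)$ is a group, and $a(b+c)=ab-a+ac$ for all $a,b,c\in A$. In a left brace, $a*b=-a+ab-b$. For subsets $L,M\subseteq A$, $L*M$ is the subgroup of $(A,+)$ generated by $\{l*m\mid l\in L,m\in M\}$. Set $A^{(1)}=A$, $A^{(r+1)}=A^{(r)}*A$, and $A^1=A$, $A^{r+1}=A*A^r$ for $r\ge1$. A subbrace is a subset that is a subgroup of both $(A,+)$ and $(A,\cdot)$; the subbrace generated by an element is the intersection of all subbraces containing it. A left brace homomorphism is a map that is a homomorphism for both operations. Generalised binomial coefficients: for $n\in\mathbb{Z}$ and integer $k\ge0$, $\binom{n}{0}=1$ and $\binom{n}{k}=\frac{n(n-1)\cdots(n-k+1)}{k!}$ for $k>0$.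 *)

theory Defs
  imports "HOL-Algebra.Algebra"
begin

text \<open>A left brace is represented by a ring record R: carrier R, addition \<oplus>, zero \<zero>
  (the abelian group (A,+)), and multiplication \<otimes>, one \<one> (the group (A,\<cdot>)).\<close>

definition left_brace :: "'a ring \<Rightarrow> bool" where
  "left_brace R \<longleftrightarrow> abelian_group R \<and> group R \<and>
     (\<forall>a\<in>carrier R. \<forall>b\<in>carrier R. \<forall>c\<in>carrier R.
        a \<otimes>\<^bsub>R\<^esub> (b \<oplus>\<^bsub>R\<^esub> c) = ((a \<otimes>\<^bsub>R\<^esub> b) \<ominus>\<^bsub>R\<^esub> a) \<oplus>\<^bsub>R\<^esub> (a \<otimes>\<^bsub>R\<^esub> c))"

definition brace_star :: "'a ring \<Rightarrow> 'a \<Rightarrow> 'a \<Rightarrow> 'a" where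
  "brace_star R a b = ((\<ominus>\<^bsub>R\<^esub> a) \<oplus>\<^bsub>R\<^esub> (a \<otimes>\<^bsub>R\<^esub> b)) \<ominus>\<^bsub>R\<^esub> b"

definition star_set :: "'a ring \<Rightarrow> 'a set \<Rightarrow> 'a set \<Rightarrow> 'a set" where
  "star_set R L M = generate (add_monoid R) {brace_star R l m | l m. l \<in> L \<and> m \<in> M}"

primrec right_aux :: "'a ring \<Rightarrow> nat \<Rightarrow> 'a set" where
  "right_aux R 0 = carrier R"
| "right_aux R (Suc k) = star_set R (right_aux R k) (carrier R)"

primrec left_aux :: "'a ring \<Rightarrow> nat \<Rightarrow> 'a set" where
  "left_aux R 0 = carrier R"
| "left_aux R (Suc k) = star_set R (carrier R) (left_aux R k)"

text \<open>A^(r) and A^r for r \<ge> 1\<close>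
definition brace_right :: "'a ring \<Rightarrow> nat \<Rightarrow> 'a set" where
  "brace_right R r = right_aux R (r - 1)"

definition brace_left :: "'a ring \<Rightarrow> nat \<Rightarrow> 'a set" where
  "brace_left R r = left_aux R (r - 1)"

definition subbrace :: "'a ring \<Rightarrow> 'a set \<Rightarrow> bool" where
  "subbrace R S \<longleftrightarrow> subgroup S (add_monoid R) \<and> subgroup S R"

definition subbrace_gen :: "'a ring \<Rightarrow> 'a \<Rightarrow> 'a set" where
  "subbrace_gen R a = \<Inter>{S. subbrace R S \<and> a \<in> S}"

definition brace_hom :: "'a ring \<Rightarrow> 'b ring \<Rightarrow> ('a \<Rightarrow> 'b) \<Rightarrow> bool" where
  "brace_hom R S f \<longleftrightarrow> f ` carrier R \<subseteq> carrier S \<and>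
     (\<forall>x\<in>carrier R. \<forall>y\<in>carrier R.
        f (x \<oplus>\<^bsub>R\<^esub> y) = f x \<oplus>\<^bsub>S\<^esub> f y \<and> f (x \<otimes>\<^bsub>R\<^esub> y) = f x \<otimes>\<^bsub>S\<^esub> f y)"

text \<open>Generalised binomial coefficient on integers: n(n-1)...(n-k+1)/k!
  (the division is exact; this is the library gchoose on int, whose syntax is
  restricted to field_char_0 in this theory context).\<close>
definition gen_binom :: "int \<Rightarrow> nat \<Rightarrow> int" where
  "gen_binom n k = (\<Prod>i=0..<k. n - int i) div fact k"

text \<open>The brace B_m on Z^m, represented as int lists of length m; list index i-1
  corresponds to coordinate i.\<close>
definition Bm_mul :: "nat \<Rightarrow> int list \<Rightarrow> int list \<Rightarrow> int list" where
  "Bm_mul m xs ys = map (\<lambda>i. xs ! i + (\<Sum>k\<le>i. gen_binom (xs ! 0) k * ys ! (i - k))) [0..<m]"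

definition Bm :: "nat \<Rightarrow> int list ring" where
  "Bm m = \<lparr> carrier = {xs. length xs = m}, monoid.mult = Bm_mul m,
            one = replicate m 0, ring.zero = replicate m 0,
            ring.add = (\<lambda>x y. map2 (+) x y) \<rparr>"

definition bvec :: "nat \<Rightarrow> int list" where
  "bvec m = 1 # replicate (m - 1) 0"

end

theory Submission
  imports Defs "HOL-Computational_Algebra.Formal_Power_Series"
begin

lemma gb_int_ex: "\<exists>z::int. (of_int n :: rat) gchoose k = of_int z"
proof (cases "n \<ge> 0")
  case True
  then obtain N where "n = int N" by (metis nonneg_int_cases)
  then show ?thesis using binomial_gbinomial[of N k, where 'a=rat]
    by (metis of_int_of_nat_eq)
next
  case False
  have e: "(of_nat k - (of_int n :: rat) - 1) = of_nat (nat (int k - n - 1))"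
    using False by simp
  show ?thesis
    apply (subst gbinomial_negated_upper)
    apply (subst e)
    apply (subst binomial_gbinomial[symmetric])
    apply (rule exI[of _ "(-1)^k * int (nat (int k - n - 1) choose k)"])
    by simp
qed

lemma gb_rat: "(of_int (gen_binom n k) :: rat) = of_int n gchoose k"
proof -
  obtain z where z: "(of_int n :: rat) gchoose k = of_int z" using gb_int_ex by blast
  have "fact k * ((of_int n :: rat) gchoose k) = (\<Prod>i = 0..<k. of_int n - of_nat i)"
    by (rule gbinomial_mult_fact)
  also have "\<dots> = of_int (\<Prod>i = 0..<k. n - int i)" by simp
  finally have "of_int (\<Prod>i = 0..<k. n - int i) = (of_int (fact k * z) :: rat)" using z by simp
  hence P: "(\<Prod>i = 0..<k. n - int i) = fact k * z" by (simp only: of_int_eq_iff)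
  have "gen_binom n k = z" unfolding gen_binom_def P by simp
  thus ?thesis using z by simp
qed

lemma gb_vdm: "(\<Sum>j=0..i. gen_binom a j * gen_binom b (i - j)) = gen_binom (a + b) i"
proof -
  have "(of_int (\<Sum>j=0..i. gen_binom a j * gen_binom b (i - j)) :: rat) = of_int (gen_binom (a + b) i)"
    by (simp add: gb_rat gbinomial_Vandermonde)
  thus ?thesis by (simp only: of_int_eq_iff)
qed

lemma gb_0 [simp]: "gen_binom n 0 = 1"
  by (simp add: gen_binom_def)
lemma gb_zero_Suc [simp]: "gen_binom 0 (Suc k) = 0"
proof -
  have "(of_int (gen_binom 0 (Suc k)) :: rat) = 0" by (simp add: gb_rat)
  thus ?thesis by simp
qed
lemma gb_one: "gen_binom 1 k = (if k \<le> 1 then 1 else 0)"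
proof -
  have "(of_int (gen_binom 1 k) :: rat) = (if k \<le> 1 then 1 else 0)"
    unfolding gb_rat using binomial_gbinomial[of 1 k, where 'a=rat]
    by (cases k) (auto simp: binomial_eq_0)
  thus ?thesis by (simp split: if_splits)
qed

definition Bn :: "int \<Rightarrow> int fps" where "Bn k = Abs_fps (gen_binom k)"
definition Fb :: "int list \<Rightarrow> int fps" where
  "Fb t = Abs_fps (\<lambda>i. if i < length t then t ! i else 0)"
definition L :: "nat \<Rightarrow> int \<Rightarrow> int list \<Rightarrow> int list" where
  "L m k t = map (\<lambda>i. fps_nth (Bn k * Fb t) i) [0..<m]"

lemma Bn_nth [simp]: "fps_nth (Bn k) i = gen_binom k i" by (simp add: Bn_def)
lemma Fb_nth: "fps_nth (Fb t) i = (if i < length t then t ! i else 0)" by (simp add: Fb_def)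

lemma Bn_add: "Bn a * Bn b = Bn (a + b)"
  by (rule fps_ext) (simp add: fps_mult_nth gb_vdm)

lemma Bn_0: "Bn 0 = 1"
proof (rule fps_ext)
  fix n show "fps_nth (Bn 0) n = fps_nth 1 n" by (cases n) (simp_all add: fps_one_nth)
qed
   
lemma Bn_1: "Bn 1 = 1 + fps_X"
  by (rule fps_ext) (auto simp: gb_one fps_one_nth fps_X_def)

lemma length_L [simp]: "length (L m k t) = m" by (simp add: L_def)
lemma L_nth: "i < m \<Longrightarrow> L m k t ! i = fps_nth (Bn k * Fb t) i" by (simp add: L_def)

lemma mult_trunc: "(\<And>i. i < m \<Longrightarrow> fps_nth F i = fps_nth G i) \<Longrightarrow> i < m \<Longrightarrow> fps_nth (H * F) i = fps_nth (H * G) i"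
  by (simp add: fps_mult_nth)

lemma Fb_L: "i < m \<Longrightarrow> fps_nth (Fb (L m k t)) i = fps_nth (Bn k * Fb t) i"
  by (simp add: Fb_nth L_nth)

lemma L_comp: "L m k (L m k' t) = L m (k + k') t"
proof (rule nth_equalityI)
  fix i assume "i < length (L m k (L m k' t))"
  hence i: "i < m" by simp
  have "fps_nth (Bn k * Fb (L m k' t)) i = fps_nth (Bn k * (Bn k' * Fb t)) i"
    by (rule mult_trunc[OF Fb_L i])
  also have "\<dots> = fps_nth (Bn (k + k') * Fb t) i" by (simp add: mult.assoc[symmetric] Bn_add)
  finally show "L m k (L m k' t) ! i = L m (k + k') t ! i" using i by (simp add: L_nth)
qed simp

lemma L_0: "length t = m \<Longrightarrow> L m 0 t = t"
  by (rule nth_equalityI) (auto simp: L_nth Bn_0 Fb_nth)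

lemma L_1: "length t = m \<Longrightarrow> i < m \<Longrightarrow> L m 1 t ! i = t ! i + (if i = 0 then 0 else t ! (i - 1))"
  by (auto simp: L_nth Bn_1 Fb_nth distrib_right)

lemma L_nth0: "0 < m \<Longrightarrow> length t = m \<Longrightarrow> L m k t ! 0 = t ! 0"
  by (simp add: L_nth fps_mult_nth Fb_nth)

lemma Fb_add: "length x = length y \<Longrightarrow> Fb (map2 (+) x y) = Fb x + Fb y"
  by (rule fps_ext) (simp add: Fb_nth)

lemma L_add: "length x = m \<Longrightarrow> length y = m \<Longrightarrow> L m k (map2 (+) x y) = map2 (+) (L m k x) (L m k y)"
  by (rule nth_equalityI) (auto simp: L_nth Fb_add distrib_left)

lemma L_sum: "length t = m \<Longrightarrow> i < m \<Longrightarrow> L m k t ! i = (\<Sum>j\<le>i. gen_binom k j * t ! (i - j))"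
  by (simp add: L_nth fps_mult_nth Fb_nth atLeast0AtMost, intro sum.cong) auto

lemma Bm_mul_L: "length xs = m \<Longrightarrow> length ys = m \<Longrightarrow> Bm_mul m xs ys = map2 (+) xs (L m (xs ! 0) ys)"
  by (rule nth_equalityI) (auto simp: Bm_mul_def L_sum)

lemma Bm_simps [simp]:
  "carrier (Bm m) = {xs. length xs = m}"
  "monoid.mult (Bm m) = Bm_mul m"
  "one (Bm m) = replicate m 0"
  "ring.zero (Bm m) = replicate m 0"
  "ring.add (Bm m) = (\<lambda>x y. map2 (+) x y)"
  by (simp_all add: Bm_def)

lemma length_Bm_mul [simp]: "length (Bm_mul m x y) = m" by (simp add: Bm_mul_def)

lemma Bm_abelian: "abelian_group (Bm m)"
proof (rule abelian_groupI, goal_cases)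
  case (6 x)
  thus ?case by (intro bexI[of _ "map uminus x"]) (auto intro!: nth_equalityI)
qed (auto intro!: nth_equalityI)

lemma Bm_ainv: "length x = m \<Longrightarrow> \<ominus>\<^bsub>Bm m\<^esub> x = map uminus x"
  by (rule abelian_group.minus_equality[OF Bm_abelian]) (auto intro!: nth_equalityI)

lemma Bm_mul0: "0 < m \<Longrightarrow> length x = m \<Longrightarrow> length y = m \<Longrightarrow> Bm_mul m x y ! 0 = x ! 0 + y ! 0"
  by (simp add: Bm_mul_L L_nth0)


lemma Bm_group: assumes m: "0 < m" shows "group (Bm m)"
proof (rule groupI, goal_cases)
  case (3 x y z)
  hence l: "length x = m" "length y = m" "length z = m" by auto
  have xy0: "Bm_mul m x y ! 0 = x ! 0 + y ! 0" using l m by (rule_tac Bm_mul0) auto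
  have "Bm_mul m (Bm_mul m x y) z = map2 (+) (Bm_mul m x y) (L m (x ! 0 + y ! 0) z)"
    using l by (simp add: Bm_mul_L[of "Bm_mul m x y"] xy0)
  also have "\<dots> = map2 (+) (map2 (+) x (L m (x!0) y)) (L m (x ! 0 + y ! 0) z)"
    using l by (simp add: Bm_mul_L)
  also have "\<dots> = map2 (+) x (map2 (+) (L m (x!0) y) (L m (x!0) (L m (y!0) z)))"
    using l by (simp add: L_comp) (rule nth_equalityI, simp_all)
  also have "\<dots> = Bm_mul m x (Bm_mul m y z)"
    using l by (simp add: Bm_mul_L L_add)
  finally show ?case by simp
next
  case (4 x)
  thus ?case using m by (simp add: Bm_mul_L L_0) (auto intro!: nth_equalityI)
next
  case (5 x)
  hence l: "length x = m" by simp
  let ?y = "map uminus (L m (- (x!0)) x)"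
  have y0: "?y ! 0 = - (x ! 0)" using m l by (simp add: L_nth0)
  show ?case
    apply (intro bexI[of _ ?y])
    using l m by (simp_all add: Bm_mul_L y0) (auto intro!: nth_equalityI)
qed auto


lemma Bm_brace: assumes m: "0 < m" shows "left_brace (Bm m)"
  unfolding left_brace_def
proof (intro conjI Bm_abelian Bm_group[OF m] ballI)
  fix a b c assume "a \<in> carrier (Bm m)" "b \<in> carrier (Bm m)" "c \<in> carrier (Bm m)"
  hence l: "length a = m" "length b = m" "length c = m" by auto
  have e1: "a \<otimes>\<^bsub>Bm m\<^esub> (b \<oplus>\<^bsub>Bm m\<^esub> c) = map2 (+) a (map2 (+) (L m (a!0) b) (L m (a!0) c))"
    using l by (simp add: Bm_mul_L L_add)
  have e2: "a \<otimes>\<^bsub>Bm m\<^esub> b \<ominus>\<^bsub>Bm m\<^esub> a \<oplus>\<^bsub>Bm m\<^esub> a \<otimes>\<^bsub>Bm m\<^esub> c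
     = map2 (+) (map2 (+) (map2 (+) a (L m (a!0) b)) (map uminus a)) (map2 (+) a (L m (a!0) c))"
    using l by (simp add: a_minus_def Bm_ainv Bm_mul_L)
  show "a \<otimes>\<^bsub>Bm m\<^esub> (b \<oplus>\<^bsub>Bm m\<^esub> c) = a \<otimes>\<^bsub>Bm m\<^esub> b \<ominus>\<^bsub>Bm m\<^esub> a \<oplus>\<^bsub>Bm m\<^esub> a \<otimes>\<^bsub>Bm m\<^esub> c"
    unfolding e1 e2 using l by (intro nth_equalityI) simp_all
qed

definition ev :: "nat \<Rightarrow> nat \<Rightarrow> int list" where
  "ev m j = map (\<lambda>i. if i = j then 1 else 0) [0..<m]"
definition Vs :: "nat \<Rightarrow> nat \<Rightarrow> int list set" where
  "Vs m j = {xs. length xs = m \<and> (\<forall>i. i < j \<longrightarrow> i < m \<longrightarrow> xs ! i = 0)}"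

lemma length_ev [simp]: "length (ev m j) = m" by (simp add: ev_def)
lemma ev_nth [simp]: "i < m \<Longrightarrow> ev m j ! i = (if i = j then 1 else 0)" by (simp add: ev_def)

lemma star_Bm: "length x = m \<Longrightarrow> length y = m \<Longrightarrow>
   brace_star (Bm m) x y = map2 (+) (L m (x!0) y) (map uminus y)"
  by (simp add: brace_star_def a_minus_def Bm_ainv Bm_mul_L) (rule nth_equalityI, simp_all)

lemma star_Bm_nth: "length x = m \<Longrightarrow> length y = m \<Longrightarrow> i < m \<Longrightarrow>
   brace_star (Bm m) x y ! i = L m (x!0) y ! i - y ! i"
  by (simp add: star_Bm)

lemma length_star_Bm [simp]: "length x = m \<Longrightarrow> length y = m \<Longrightarrow> length (brace_star (Bm m) x y) = m"
  by (simp add: star_Bm)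

lemma bvec_len [simp]: "0 < m \<Longrightarrow> length (bvec m) = m" by (simp add: bvec_def)
lemma bvec0 [simp]: "bvec m ! 0 = 1" by (simp add: bvec_def)

lemma star_b_nth: "0 < m \<Longrightarrow> length y = m \<Longrightarrow> i < m \<Longrightarrow>
   brace_star (Bm m) (bvec m) y ! i = (if i = 0 then 0 else y ! (i - 1))"
  by (simp add: star_Bm_nth L_1)

lemma ev0: "0 < m \<Longrightarrow> ev m 0 = bvec m"
  by (rule nth_equalityI) (auto simp: bvec_def nth_Cons split: nat.splits)

lemma ev_Suc: "0 < m \<Longrightarrow> brace_star (Bm m) (bvec m) (ev m j) = ev m (Suc j)"
  by (rule nth_equalityI) (auto simp: star_b_nth)

lemma star_V: assumes "length x = m" "y \<in> Vs m j" shows "brace_star (Bm m) x y \<in> Vs m (Suc j)"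
proof -
  have l: "length y = m" "\<forall>i. i < j \<longrightarrow> i < m \<longrightarrow> y ! i = 0" using assms unfolding Vs_def by auto
  have "L m (x!0) y ! i - y ! i = 0" if i: "i < Suc j" "i < m" for i
  proof -
    have "(\<Sum>k\<le>i. gen_binom (x!0) k * y ! (i - k)) = (\<Sum>k\<in>{0}. gen_binom (x!0) k * y ! (i - k))"
      by (rule sum.mono_neutral_right) (use i l in auto)
    thus ?thesis using i l by (simp add: L_sum)
  qed
  thus ?thesis using assms l unfolding Vs_def by (auto simp: star_Bm_nth)
qed

lemma star_zero0: assumes "length x = m" "length y = m" "x ! 0 = 0"
  shows "brace_star (Bm m) x y = replicate m 0"
  using assms by (simp add: star_Bm L_0) (rule nth_equalityI, simp_all)

lemma Vs_m: "Vs m m = {replicate m 0}"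
  unfolding Vs_def by (auto intro: nth_equalityI)

lemma Vs_0: "Vs m 0 = carrier (Bm m)" unfolding Vs_def by auto

lemma Bm_gen:
  assumes m: "0 < m" and sub: "S \<subseteq> {xs. length xs = m}"
    and add: "\<And>x y. x \<in> S \<Longrightarrow> y \<in> S \<Longrightarrow> map2 (+) x y \<in> S"
    and neg: "\<And>x. x \<in> S \<Longrightarrow> map uminus x \<in> S"
    and zero: "replicate m 0 \<in> S" and bv: "bvec m \<in> S"
    and st: "\<And>y. y \<in> S \<Longrightarrow> brace_star (Bm m) (bvec m) y \<in> S"
  shows "carrier (Bm m) \<subseteq> S"
proof -
  have evS: "ev m j \<in> S" if "j < m" for j using that
  proof (induction j)
    case 0 thus ?case using ev0[OF m] bv by simp
  next
    case (Suc j)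
    thus ?case using ev_Suc[OF m, of j] st[of "ev m j"] by simp
  qed
  have "k \<le> m \<Longrightarrow> Vs m (m - k) \<subseteq> S" for k
  proof (induction k)
    case 0 thus ?case using Vs_m zero by simp
  next
    case (Suc k)
    define j where "j = m - Suc k"
    have j: "j < m" "Suc j = m - k" using Suc.prems unfolding j_def by auto
    have IH: "Vs m (Suc j) \<subseteq> S" using Suc j by simp
    have P: "\<forall>xs\<in>Vs m j. xs ! j = c \<longrightarrow> xs \<in> S" for c
    proof (induction c rule: int_induct[where k=0])
      case base
      show ?case
      proof (intro ballI impI)
        fix xs assume "xs \<in> Vs m j" "xs ! j = 0"
        hence "xs \<in> Vs m (Suc j)" unfolding Vs_def using less_Suc_eq by auto
        thus "xs \<in> S" using IH by auto
      qed
    next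
      case (step1 c)
      show ?case
      proof (intro ballI impI)
        fix xs assume xs: "xs \<in> Vs m j" "xs ! j = c + 1"
        define ys where "ys = map2 (+) xs (map uminus (ev m j))"
        have "ys \<in> Vs m j" "ys ! j = c" using xs j unfolding ys_def Vs_def by auto
        hence "ys \<in> S" using step1 by auto
        hence "map2 (+) ys (ev m j) \<in> S" using add evS j by auto
        moreover have "map2 (+) ys (ev m j) = xs"
          using xs unfolding ys_def Vs_def by (intro nth_equalityI) auto
        ultimately show "xs \<in> S" by simp
      qed
    next
      case (step2 c)
      show ?case
      proof (intro ballI impI)
        fix xs assume xs: "xs \<in> Vs m j" "xs ! j = c - 1"
        define ys where "ys = map2 (+) xs (ev m j)"
        have "ys \<in> Vs m j" "ys ! j = c" using xs j unfolding ys_def Vs_def by auto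
        hence "ys \<in> S" using step2 by auto
        hence "map2 (+) ys (map uminus (ev m j)) \<in> S" using add neg evS j by auto
        moreover have "map2 (+) ys (map uminus (ev m j)) = xs"
          using xs unfolding ys_def Vs_def by (intro nth_equalityI) auto
        ultimately show "xs \<in> S" by simp
      qed
    qed
    show ?case unfolding j(2)[symmetric] j_def[symmetric] using P by blast
  qed
  from this[of m] show ?thesis using Vs_0 by simp
qed

lemma gen_in:
  assumes "x \<in> generate (add_monoid R) K" "\<zero>\<^bsub>R\<^esub> \<in> H" "K \<subseteq> H"
    "\<And>h. h \<in> K \<Longrightarrow> \<ominus>\<^bsub>R\<^esub> h \<in> H" "\<And>x y. x \<in> H \<Longrightarrow> y \<in> H \<Longrightarrow> x \<oplus>\<^bsub>R\<^esub> y \<in> H"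
  shows "x \<in> H"
  using assms(1)
proof (induction rule: generate.induct)
  case one thus ?case using assms(2) by simp
next
  case (incl h) thus ?case using assms(3) by auto
next
  case (inv h) thus ?case using assms(4) by (simp add: a_inv_def)
next
  case (eng h1 h2) thus ?case using assms(5) by simp
qed

lemma zero_gen: "\<zero>\<^bsub>R\<^esub> \<in> generate (add_monoid R) K"
  using generate.one[of "add_monoid R" K] by simp

lemma left_aux_Bm: "left_aux (Bm m) k \<subseteq> Vs m k"
proof (induction k)
  case 0 thus ?case using Vs_0 by simp
next
  case (Suc k)
  show ?case
  proof
    fix x assume "x \<in> left_aux (Bm m) (Suc k)"
    hence x: "x \<in> generate (add_monoid (Bm m)) {brace_star (Bm m) l y | l y. l \<in> carrier (Bm m) \<and> y \<in> left_aux (Bm m) k}"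
      by (simp add: star_set_def)
    show "x \<in> Vs m (Suc k)"
    proof (rule gen_in[OF x])
      show "\<zero>\<^bsub>Bm m\<^esub> \<in> Vs m (Suc k)" unfolding Vs_def by simp
      show "{brace_star (Bm m) l y | l y. l \<in> carrier (Bm m) \<and> y \<in> left_aux (Bm m) k} \<subseteq> Vs m (Suc k)"
        using Suc star_V by auto
      fix h assume "h \<in> {brace_star (Bm m) l y | l y. l \<in> carrier (Bm m) \<and> y \<in> left_aux (Bm m) k}"
      hence "h \<in> Vs m (Suc k)" using Suc star_V by auto
      thus "\<ominus>\<^bsub>Bm m\<^esub> h \<in> Vs m (Suc k)" unfolding Vs_def by (simp add: Bm_ainv)
    next
      fix x y assume "x \<in> Vs m (Suc k)" "y \<in> Vs m (Suc k)"
      thus "x \<oplus>\<^bsub>Bm m\<^esub> y \<in> Vs m (Suc k)" unfolding Vs_def by simp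
    qed
  qed
qed

lemma Bm_left_top: assumes "0 < m" shows "brace_left (Bm m) (m + 1) = {\<zero>\<^bsub>Bm m\<^esub>}"
proof -
  have "left_aux (Bm m) m \<subseteq> {replicate m 0}" using left_aux_Bm[of m m] Vs_m by simp
  moreover have "replicate m 0 \<in> left_aux (Bm m) m"
    using assms zero_gen[of "Bm m"] by (cases m) (simp_all add: star_set_def)
  ultimately show ?thesis by (auto simp: brace_left_def)
qed

lemma Bm_left_ne: assumes "0 < m" shows "brace_left (Bm m) m \<noteq> {\<zero>\<^bsub>Bm m\<^esub>}"
proof -
  have "k < m \<Longrightarrow> ev m k \<in> left_aux (Bm m) k" for k
  proof (induction k)
    case 0 thus ?case by simp
  next
    case (Suc k)
    hence ek: "ev m k \<in> left_aux (Bm m) k" by simp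
    have "brace_star (Bm m) (bvec m) (ev m k) \<in> {brace_star (Bm m) l y | l y. l \<in> carrier (Bm m) \<and> y \<in> left_aux (Bm m) k}"
      using ek bvec_len[OF assms] by auto
    hence "brace_star (Bm m) (bvec m) (ev m k) \<in> left_aux (Bm m) (Suc k)"
      by (simp add: star_set_def generate.incl)
    thus ?case using ev_Suc[OF assms] by simp
  qed
  from this[of "m - 1"] assms have "ev m (m - 1) \<in> brace_left (Bm m) m" by (simp add: brace_left_def)
  moreover have "ev m (m - 1) \<noteq> replicate m 0"
  proof
    assume "ev m (m - 1) = replicate m 0"
    hence "ev m (m - 1) ! (m - 1) = replicate m 0 ! (m - 1)" by simp
    thus False using assms by simp
  qed
  ultimately show ?thesis by auto
qed

lemma Bm_right3: assumes "0 < m" shows "brace_right (Bm m) 3 = {\<zero>\<^bsub>Bm m\<^esub>}"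
proof -
  have r1: "right_aux (Bm m) 1 \<subseteq> Vs m 1"
  proof
    fix x assume "x \<in> right_aux (Bm m) 1"
    hence x: "x \<in> generate (add_monoid (Bm m)) {brace_star (Bm m) l y | l y. l \<in> carrier (Bm m) \<and> y \<in> carrier (Bm m)}"
      by (simp add: star_set_def)
    show "x \<in> Vs m 1"
    proof (rule gen_in[OF x])
      show "\<zero>\<^bsub>Bm m\<^esub> \<in> Vs m 1" unfolding Vs_def by simp
      show "{brace_star (Bm m) l y | l y. l \<in> carrier (Bm m) \<and> y \<in> carrier (Bm m)} \<subseteq> Vs m 1"
        using star_V[of _ m _ 0] Vs_0 by auto
      fix h assume "h \<in> {brace_star (Bm m) l y | l y. l \<in> carrier (Bm m) \<and> y \<in> carrier (Bm m)}"
      hence "h \<in> Vs m 1" using star_V[of _ m _ 0] Vs_0 by auto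
      thus "\<ominus>\<^bsub>Bm m\<^esub> h \<in> Vs m 1" unfolding Vs_def by (simp add: Bm_ainv)
    next
      fix x y assume "x \<in> Vs m 1" "y \<in> Vs m 1"
      thus "x \<oplus>\<^bsub>Bm m\<^esub> y \<in> Vs m 1" unfolding Vs_def by simp
    qed
  qed
  have "right_aux (Bm m) 2 \<subseteq> {replicate m 0}"
  proof
    fix x assume "x \<in> right_aux (Bm m) 2"
    hence x: "x \<in> generate (add_monoid (Bm m)) {brace_star (Bm m) l y | l y. l \<in> right_aux (Bm m) 1 \<and> y \<in> carrier (Bm m)}"
      by (simp add: star_set_def numeral_2_eq_2)
    have G: "{brace_star (Bm m) l y | l y. l \<in> right_aux (Bm m) 1 \<and> y \<in> carrier (Bm m)} \<subseteq> {replicate m 0}"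
      using r1 assms by (force simp: Vs_def intro!: star_zero0)
    show "x \<in> {replicate m 0}"
    proof (rule gen_in[OF x])
      fix h assume "h \<in> {brace_star (Bm m) l y | l y. l \<in> right_aux (Bm m) 1 \<and> y \<in> carrier (Bm m)}"
      hence "h = replicate m 0" using G by auto
      thus "\<ominus>\<^bsub>Bm m\<^esub> h \<in> {replicate m 0}" by (simp add: Bm_ainv)
    qed (use G in auto)
  qed
  moreover have "replicate m 0 \<in> right_aux (Bm m) 2"
    using zero_gen[of "Bm m"] by (simp add: star_set_def numeral_2_eq_2)
  ultimately show ?thesis by (auto simp: brace_right_def numeral_3_eq_3 numeral_2_eq_2)
qed

definition lam :: "'a ring \<Rightarrow> 'a \<Rightarrow> 'a \<Rightarrow> 'a" where
  "lam A x y = (\<ominus>\<^bsub>A\<^esub> x) \<oplus>\<^bsub>A\<^esub> (x \<otimes>\<^bsub>A\<^esub> y)"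

lemma star_lam: "brace_star A x y = lam A x y \<ominus>\<^bsub>A\<^esub> y"
  by (simp add: brace_star_def lam_def)

locale lbrace = abelian_group A + group A for A :: "'a ring" (structure) +
  assumes distr: "\<And>a b c. a \<in> carrier A \<Longrightarrow> b \<in> carrier A \<Longrightarrow> c \<in> carrier A \<Longrightarrow>
     a \<otimes> (b \<oplus> c) = ((a \<otimes> b) \<ominus> a) \<oplus> (a \<otimes> c)"

lemma lbraceI: "left_brace A \<Longrightarrow> lbrace A"
  unfolding left_brace_def lbrace_def lbrace_axioms_def by blast

context lbrace begin

lemma neg_zero [simp]: "\<ominus> \<zero> = \<zero>"
  by (rule minus_equality) simp_all

lemma one_zero: "\<one> = \<zero>"
proof -
  have "\<one> \<otimes> (\<zero> \<oplus> \<zero>) = ((\<one> \<otimes> \<zero>) \<ominus> \<one>) \<oplus> (\<one> \<otimes> \<zero>)" by (rule distr) auto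
  hence "\<zero> = \<ominus> \<one>" by (simp add: a_minus_def)
  hence "\<ominus> \<zero> = \<one>" using minus_minus[of \<one>] by simp
  thus ?thesis by simp
qed

lemma lam_closed [simp]: "x \<in> carrier A \<Longrightarrow> y \<in> carrier A \<Longrightarrow> lam A x y \<in> carrier A"
  by (simp add: lam_def)

lemma mult_lam: "x \<in> carrier A \<Longrightarrow> y \<in> carrier A \<Longrightarrow> x \<otimes> y = x \<oplus> lam A x y"
  by (simp add: lam_def a_assoc[symmetric] r_neg)

lemma lam_add: "x \<in> carrier A \<Longrightarrow> y \<in> carrier A \<Longrightarrow> z \<in> carrier A \<Longrightarrow>
   lam A x (y \<oplus> z) = lam A x y \<oplus> lam A x z"
  by (simp add: lam_def distr a_minus_def a_ac)

lemma lam_zero: "x \<in> carrier A \<Longrightarrow> lam A x \<zero> = \<zero>"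
proof -
  assume x: "x \<in> carrier A"
  have "x \<otimes> \<zero> = x" using r_one[OF x] one_zero by simp
  thus ?thesis using x by (simp add: lam_def l_neg)
qed

lemma lam_neg: "x \<in> carrier A \<Longrightarrow> y \<in> carrier A \<Longrightarrow> lam A x (\<ominus> y) = \<ominus> lam A x y"
proof -
  assume xy: "x \<in> carrier A" "y \<in> carrier A"
  have "lam A x y \<oplus> lam A x (\<ominus> y) = \<zero>"
    using lam_add[of x y "\<ominus> y"] xy by (simp add: r_neg lam_zero)
  thus ?thesis using xy by (metis a_inv_closed add.inv_comm lam_closed minus_equality)
qed

lemma lam_one: "z \<in> carrier A \<Longrightarrow> lam A \<zero> z = z"
proof -
  assume z: "z \<in> carrier A"
  have e: "\<zero> \<otimes> z = z" using l_one[OF z] one_zero by simp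
  show ?thesis by (simp only: lam_def neg_zero e) (simp add: z)
qed

lemma lam_comp: "x \<in> carrier A \<Longrightarrow> y \<in> carrier A \<Longrightarrow> z \<in> carrier A \<Longrightarrow>
   lam A x (lam A y z) = lam A (x \<otimes> y) z"
proof -
  assume xyz: "x \<in> carrier A" "y \<in> carrier A" "z \<in> carrier A"
  have "lam A x (lam A y z) = lam A x (\<ominus> y) \<oplus> lam A x (y \<otimes> z)"
    using xyz lam_add[of x "\<ominus> y" "y \<otimes> z"] by (simp add: lam_def[of A y z])
  also have "\<dots> = \<ominus> (\<ominus> x \<oplus> x \<otimes> y) \<oplus> (\<ominus> x \<oplus> x \<otimes> (y \<otimes> z))"
    using xyz by (simp add: lam_neg) (simp add: lam_def)
  also have "\<dots> = lam A (x \<otimes> y) z"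
    using xyz by (simp add: lam_def minus_add minus_minus m_assoc a_ac r_neg1 r_neg2)
  finally show ?thesis .
qed

lemma star_closed [simp]: "x \<in> carrier A \<Longrightarrow> y \<in> carrier A \<Longrightarrow> brace_star A x y \<in> carrier A"
  by (simp add: star_lam)

lemma lam_hom: "x \<in> carrier A \<Longrightarrow> lam A x \<in> hom (add_monoid A) (add_monoid A)"
  by (auto simp: hom_def lam_add)

lemma lam_pow: "x \<in> carrier A \<Longrightarrow> y \<in> carrier A \<Longrightarrow>
   lam A x (add_pow A (c::int) y) = add_pow A c (lam A x y)"
  using hom_int_pow[OF lam_hom[of x], of y c] a_group
  by (simp add: add_pow_def)

end

locale lbrace3 = lbrace +
  assumes r3: "brace_right A 3 = {\<zero>}"
begin

lemma star_triv: assumes "x \<in> carrier A" "y \<in> carrier A" "z \<in> carrier A"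
  shows "lam A (brace_star A x y) z = z"
proof -
  have s1: "brace_star A x y \<in> right_aux A 1"
    using assms by (auto simp: star_set_def intro!: generate.incl)
  have "brace_star A (brace_star A x y) z \<in> {brace_star A l m | l m. l \<in> right_aux A 1 \<and> m \<in> carrier A}"
    using s1 assms by blast
  hence "brace_star A (brace_star A x y) z \<in> right_aux A 2"
    by (simp add: numeral_2_eq_2 star_set_def generate.incl)
  hence e: "brace_star A (brace_star A x y) z = \<zero>"
    using r3 by (simp add: brace_right_def numeral_3_eq_3 numeral_2_eq_2)
  have sc: "brace_star A x y \<in> carrier A" using assms by (simp add: star_lam)
  show ?thesis using e sc assms
    by (metis add.inv_solve_right' l_zero lam_closed minus_closed a_minus_def star_lam)
qed

lemma lam_absorb: assumes "w \<in> carrier A" "u \<in> carrier A" "z \<in> carrier A"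
  and "\<And>z. z \<in> carrier A \<Longrightarrow> lam A w z = z"
  shows "lam A (u \<oplus> w) z = lam A u z"
proof -
  have "u \<oplus> w = w \<otimes> u" using assms by (simp add: mult_lam a_comm)
  thus ?thesis using assms by (simp add: lam_comp[symmetric])
qed

lemma lam_sum: assumes "x \<in> carrier A" "y \<in> carrier A" "z \<in> carrier A"
  shows "lam A (x \<oplus> y) z = lam A x (lam A y z)"
proof -
  have "x \<otimes> y = (x \<oplus> y) \<oplus> brace_star A x y"
    using assms by (simp add: mult_lam star_lam a_minus_def a_ac l_neg r_neg1 r_neg2)
  moreover have "lam A ((x \<oplus> y) \<oplus> brace_star A x y) z = lam A (x \<oplus> y) z"
    by (rule lam_absorb) (use assms in \<open>simp_all add: star_triv\<close>)
  ultimately have "lam A (x \<otimes> y) z = lam A (x \<oplus> y) z" by simp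
  thus ?thesis using assms by (simp add: lam_comp)
qed

lemma lam_pow_triv: assumes "w \<in> carrier A" "\<And>z. z \<in> carrier A \<Longrightarrow> lam A w z = z" "z \<in> carrier A"
  shows "lam A (add_pow A (c::int) w) z = z"
proof (induction c rule: int_induct[where k=0])
  case base thus ?case using assms by (simp add: add_pow_def lam_one)
next
  case (step1 c)
  have "add_pow A (c + 1) w = add_pow A c w \<oplus> w"
    using assms add.int_pow_mult[of w c 1] by simp
  thus ?case using step1 assms by (simp add: lam_sum)
next
  case (step2 c)
  have "add_pow A c w = add_pow A (c - 1) w \<oplus> w"
    using assms add.int_pow_mult[of w "c - 1" 1] by simp
  hence "lam A (add_pow A c w) z = lam A (add_pow A (c - 1) w) z"
    using assms by (simp add: lam_sum)
  thus ?case using step2 by simp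
qed

end

primrec sa :: "'a ring \<Rightarrow> 'a \<Rightarrow> nat \<Rightarrow> 'a" where
  "sa A a 0 = a"
| "sa A a (Suc i) = brace_star A a (sa A a i)"

primrec Ev :: "'a ring \<Rightarrow> 'a \<Rightarrow> nat \<Rightarrow> int list \<Rightarrow> 'a" where
  "Ev A a i [] = \<zero>\<^bsub>A\<^esub>"
| "Ev A a i (c # cs) = add_pow A c (sa A a i) \<oplus>\<^bsub>A\<^esub> Ev A a (Suc i) cs"

locale lbA = lbrace3 +
  fixes m :: nat and a
  assumes lm: "brace_left A (m + 1) = {\<zero>}" and a: "a \<in> carrier A" and m: "0 < m"
begin

lemma sa_closed [simp]: "sa A a i \<in> carrier A"
  by (induction i) (simp_all add: a)

declare sa.simps(2) [simp del]

lemma sa_left: "sa A a i \<in> left_aux A i"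
proof (induction i)
  case 0 thus ?case by (simp add: a)
next
  case (Suc i)
  have "sa A a (Suc i) \<in> {brace_star A l y | l y. l \<in> carrier A \<and> y \<in> left_aux A i}"
    using Suc a by (auto simp: sa.simps(2))
  thus ?case by (simp add: star_set_def generate.incl)
qed

lemma sa_m: "sa A a m = \<zero>"
  using sa_left[of m] lm by (simp add: brace_left_def)

lemma lam_a_sa: "lam A a (sa A a i) = sa A a i \<oplus> sa A a (Suc i)"
  using a by (simp add: sa.simps(2) star_lam a_minus_def a_comm r_neg2)

lemma sa_triv: "z \<in> carrier A \<Longrightarrow> lam A (sa A a (Suc i)) z = z"
  using a by (simp add: sa.simps(2) star_triv)

lemma pow_closed [simp]: "x \<in> carrier A \<Longrightarrow> add_pow A (c::int) x \<in> carrier A"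
  using add.int_pow_closed by simp

lemma pow1 [simp]: "x \<in> carrier A \<Longrightarrow> add_pow A (1::int) x = x"
  using add.int_pow_1 by simp

lemma Ev_closed [simp]: "Ev A a i cs \<in> carrier A"
  by (induction cs arbitrary: i) simp_all

lemma Ev_add: "length cs = length ds \<Longrightarrow> Ev A a i (map2 (+) cs ds) = Ev A a i cs \<oplus> Ev A a i ds"
proof (induction cs arbitrary: ds i)
  case Nil thus ?case by simp
next
  case (Cons c cs)
  then obtain d ds' where ds: "ds = d # ds'" by (cases ds) auto
  have "add_pow A (c + d) (sa A a i) = add_pow A c (sa A a i) \<oplus> add_pow A d (sa A a i)"
    by (simp add: add.int_pow_mult)
  thus ?case using Cons ds by (simp add: a_ac)
qed

lemma Ev_lam_a: "lam A a (Ev A a i cs) = Ev A a i cs \<oplus> Ev A a (Suc i) cs"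
proof (induction cs arbitrary: i)
  case Nil thus ?case using a by (simp add: lam_zero)
next
  case (Cons c cs)
  have "lam A a (Ev A a i (c # cs)) = lam A a (add_pow A c (sa A a i)) \<oplus> lam A a (Ev A a (Suc i) cs)"
    using a by (simp add: lam_add)
  also have "\<dots> = (add_pow A c (sa A a i) \<oplus> add_pow A c (sa A a (Suc i))) \<oplus> (Ev A a (Suc i) cs \<oplus> Ev A a (Suc (Suc i)) cs)"
    using a Cons by (simp add: lam_pow lam_a_sa add.int_pow_distrib)
  finally show ?case by (simp add: a_ac)
qed

lemma Ev_snoc: "Ev A a i (cs @ [c]) = Ev A a i cs \<oplus> add_pow A c (sa A a (i + length cs))"
  by (induction cs arbitrary: i) (simp_all add: a_ac)

lemma pow0 [simp]: "add_pow A (0::int) x = \<zero>"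
  by (simp add: add_pow_def)

lemma Ev_zero_hd: "Ev A a i (0 # cs) = Ev A a (Suc i) cs" by simp

lemma Ev_rep0: "Ev A a i (replicate k 0) = \<zero>"
  by (induction k arbitrary: i) simp_all

lemma Ev_L1: assumes t: "length t = m" shows "lam A a (Ev A a 0 t) = Ev A a 0 (L m 1 t)"
proof -
  have tne: "t \<noteq> []" using t m by auto
  have "Ev A a 1 t = Ev A a 0 ((0 # butlast t) @ [last t])" (is "_ = ?r")
  proof -
    have "(0 # butlast t) @ [last t] = 0 # t" using append_butlast_last_id[OF tne] by simp
    thus ?thesis by simp
  qed
  also have "\<dots> = Ev A a 0 (0 # butlast t) \<oplus> add_pow A (last t) (sa A a (0 + length (0 # butlast t)))"
    by (rule Ev_snoc)
  also have "\<dots> = Ev A a 0 (0 # butlast t)"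
    using tne t m by (simp add: sa_m)
  finally have e1: "Ev A a 1 t = Ev A a 0 (0 # butlast t)" .
  have e2: "L m 1 t = map2 (+) t (0 # butlast t)"
    using t m by (intro nth_equalityI) (auto simp: L_1 nth_Cons nth_butlast split: nat.splits)
  have e1': "Ev A a (Suc 0) t = Ev A a (Suc 0) (butlast t)" using e1 by simp
  show ?thesis using t m by (simp add: Ev_lam_a e1' e2 Ev_add)
qed

lemma Ev_Lc: assumes t: "length t = m" shows "lam A (add_pow A c a) (Ev A a 0 t) = Ev A a 0 (L m c t)"
  using t
proof (induction c arbitrary: t rule: int_induct[where k=0])
  case base thus ?case by (simp add: lam_one L_0)
next
  case (step1 c)
  have "add_pow A (c + 1) a = add_pow A c a \<oplus> a"
    using a add.int_pow_mult[of a c 1] by simp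
  hence "lam A (add_pow A (c + 1) a) (Ev A a 0 t) = lam A (add_pow A c a) (lam A a (Ev A a 0 t))"
    using a by (simp add: lam_sum)
  also have "\<dots> = Ev A a 0 (L m c (L m 1 t))" using step1 by (simp add: Ev_L1)
  finally show ?case by (simp add: L_comp)
next
  case (step2 c)
  have "add_pow A c a = add_pow A (c - 1) a \<oplus> a"
    using a add.int_pow_mult[of a "c - 1" 1] by simp
  have e: "Ev A a 0 t = lam A a (Ev A a 0 (L m (-1) t))"
    using step2 by (simp add: Ev_L1 L_comp L_0)
  have "lam A (add_pow A (c - 1) a) (Ev A a 0 t) = lam A (add_pow A c a) (Ev A a 0 (L m (-1) t))"
    unfolding e \<open>add_pow A c a = _\<close> using a by (simp add: lam_sum)
  also have "\<dots> = Ev A a 0 (L m (c - 1) t)" using step2 by (simp add: L_comp)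
  finally show ?case .
qed

lemma Ev_triv: "z \<in> carrier A \<Longrightarrow> lam A (Ev A a (Suc i) cs) z = z"
proof (induction cs arbitrary: i)
  case Nil thus ?case by (simp add: lam_one)
next
  case (Cons c cs)
  have "lam A (add_pow A c (sa A a (Suc i))) z = z"
    by (rule lam_pow_triv) (use Cons.prems sa_triv in auto)
  thus ?case using Cons by (simp add: lam_sum)
qed

lemma Ev_lam: assumes "length xs = m" "z \<in> carrier A"
  shows "lam A (Ev A a 0 xs) z = lam A (add_pow A (xs ! 0) a) z"
proof -
  obtain c cs where xs: "xs = c # cs" using assms m by (cases xs) auto
  show ?thesis using assms a by (simp add: xs lam_sum Ev_triv)
qed

lemma f_hom: "brace_hom (Bm m) A (Ev A a 0)"
  unfolding brace_hom_def
proof (intro conjI ballI)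
  show "Ev A a 0 ` carrier (Bm m) \<subseteq> carrier A" by auto
  fix x y assume "x \<in> carrier (Bm m)" "y \<in> carrier (Bm m)"
  hence l: "length x = m" "length y = m" by auto
  show "Ev A a 0 (x \<oplus>\<^bsub>Bm m\<^esub> y) = Ev A a 0 x \<oplus> Ev A a 0 y"
    using l by (simp add: Ev_add)
  have "Ev A a 0 (x \<otimes>\<^bsub>Bm m\<^esub> y) = Ev A a 0 x \<oplus> Ev A a 0 (L m (x!0) y)"
    using l by (simp add: Bm_mul_L Ev_add)
  also have "\<dots> = Ev A a 0 x \<oplus> lam A (Ev A a 0 x) (Ev A a 0 y)"
    using l by (simp add: Ev_lam Ev_Lc)
  also have "\<dots> = Ev A a 0 x \<otimes> Ev A a 0 y" by (simp add: mult_lam)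
  finally show "Ev A a 0 (x \<otimes>\<^bsub>Bm m\<^esub> y) = Ev A a 0 x \<otimes> Ev A a 0 y" .
qed

lemma f_b: "Ev A a 0 (bvec m) = a"
  using a by (simp add: bvec_def Ev_rep0)

end

lemma hom_zero: assumes R: "abelian_group R" and S: "abelian_group S" and h: "brace_hom R S h"
  shows "h \<zero>\<^bsub>R\<^esub> = \<zero>\<^bsub>S\<^esub>"
proof -
  interpret R: abelian_group R by fact
  interpret S: abelian_group S by fact
  have c: "h \<zero>\<^bsub>R\<^esub> \<in> carrier S" using h by (auto simp: brace_hom_def)
  have "h \<zero>\<^bsub>R\<^esub> = h \<zero>\<^bsub>R\<^esub> \<oplus>\<^bsub>S\<^esub> h \<zero>\<^bsub>R\<^esub>"
    using h R.zero_closed R.l_zero[of "\<zero>\<^bsub>R\<^esub>"] unfolding brace_hom_def by metis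
  hence "\<ominus>\<^bsub>S\<^esub> h \<zero>\<^bsub>R\<^esub> \<oplus>\<^bsub>S\<^esub> h \<zero>\<^bsub>R\<^esub> = \<ominus>\<^bsub>S\<^esub> h \<zero>\<^bsub>R\<^esub> \<oplus>\<^bsub>S\<^esub> (h \<zero>\<^bsub>R\<^esub> \<oplus>\<^bsub>S\<^esub> h \<zero>\<^bsub>R\<^esub>)"
    by simp
  thus ?thesis using c by (simp add: S.l_neg S.r_neg1)
qed

lemma hom_neg: assumes R: "abelian_group R" and S: "abelian_group S" and h: "brace_hom R S h"
  and x: "x \<in> carrier R"
  shows "h (\<ominus>\<^bsub>R\<^esub> x) = \<ominus>\<^bsub>S\<^esub> h x"
proof -
  interpret R: abelian_group R by fact
  interpret S: abelian_group S by fact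
  have "h (\<ominus>\<^bsub>R\<^esub> x) \<oplus>\<^bsub>S\<^esub> h x = h (\<ominus>\<^bsub>R\<^esub> x \<oplus>\<^bsub>R\<^esub> x)"
    using h x unfolding brace_hom_def by simp
  also have "\<dots> = \<zero>\<^bsub>S\<^esub>" using x hom_zero[OF R S h] by (simp add: R.l_neg)
  finally have e: "h (\<ominus>\<^bsub>R\<^esub> x) \<oplus>\<^bsub>S\<^esub> h x = \<zero>\<^bsub>S\<^esub>" .
  show ?thesis by (rule S.minus_equality[OF e, symmetric]) (use h x in \<open>auto simp: brace_hom_def\<close>)
qed

lemma hom_star: assumes R: "left_brace R" and S: "left_brace S" and h: "brace_hom R S h"
  and x: "x \<in> carrier R" and y: "y \<in> carrier R"
  shows "h (brace_star R x y) = brace_star S (h x) (h y)"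
proof -
  interpret R: abelian_group R using R by (simp add: left_brace_def)
  interpret S: abelian_group S using S by (simp add: left_brace_def)
  interpret R': group R using R by (simp add: left_brace_def)
  have a: "abelian_group R" "abelian_group S" by unfold_locales
  show ?thesis using x y h hom_neg[OF a h]
    by (simp add: brace_star_def a_minus_def brace_hom_def)
qed

lemma hom_one: assumes R: "group R" and S: "group S" and h: "brace_hom R S h"
  shows "h \<one>\<^bsub>R\<^esub> = \<one>\<^bsub>S\<^esub>"
proof -
  interpret R: group R by fact
  interpret S: group S by fact
  have c: "h \<one>\<^bsub>R\<^esub> \<in> carrier S" using h by (auto simp: brace_hom_def)
  have "h \<one>\<^bsub>R\<^esub> = h \<one>\<^bsub>R\<^esub> \<otimes>\<^bsub>S\<^esub> h \<one>\<^bsub>R\<^esub>"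
    using h R.one_closed R.l_one[of "\<one>\<^bsub>R\<^esub>"] unfolding brace_hom_def by metis
  hence "inv\<^bsub>S\<^esub> h \<one>\<^bsub>R\<^esub> \<otimes>\<^bsub>S\<^esub> h \<one>\<^bsub>R\<^esub> = inv\<^bsub>S\<^esub> h \<one>\<^bsub>R\<^esub> \<otimes>\<^bsub>S\<^esub> (h \<one>\<^bsub>R\<^esub> \<otimes>\<^bsub>S\<^esub> h \<one>\<^bsub>R\<^esub>)"
    by simp
  thus ?thesis using c by (simp add: S.m_assoc[symmetric])
qed

lemma hom_inv: assumes R: "group R" and S: "group S" and h: "brace_hom R S h"
  and x: "x \<in> carrier R"
  shows "h (inv\<^bsub>R\<^esub> x) = inv\<^bsub>S\<^esub> h x"
proof -
  interpret R: group R by fact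
  interpret S: group S by fact
  have "h (inv\<^bsub>R\<^esub> x) \<otimes>\<^bsub>S\<^esub> h x = h (inv\<^bsub>R\<^esub> x \<otimes>\<^bsub>R\<^esub> x)"
  proof -
    have hm: "\<forall>x\<in>carrier R. \<forall>y\<in>carrier R. h (x \<otimes>\<^bsub>R\<^esub> y) = h x \<otimes>\<^bsub>S\<^esub> h y"
      using h by (simp add: brace_hom_def)
    show ?thesis using hm[rule_format, OF R.inv_closed[OF x] x, symmetric] .
  qed
  also have "\<dots> = \<one>\<^bsub>S\<^esub>" using x hom_one[OF R S h] by simp
  finally have e: "h (inv\<^bsub>R\<^esub> x) \<otimes>\<^bsub>S\<^esub> h x = \<one>\<^bsub>S\<^esub>" .
  show ?thesis by (rule S.inv_equality[OF e, symmetric]) (use h x in \<open>auto simp: brace_hom_def\<close>)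
qed

lemma subbrace_cl: assumes A: "left_brace A" and S: "subbrace A S"
  shows "S \<subseteq> carrier A" "\<zero>\<^bsub>A\<^esub> \<in> S"
    "\<And>x y. x \<in> S \<Longrightarrow> y \<in> S \<Longrightarrow> x \<oplus>\<^bsub>A\<^esub> y \<in> S"
    "\<And>x. x \<in> S \<Longrightarrow> \<ominus>\<^bsub>A\<^esub> x \<in> S"
    "\<And>x y. x \<in> S \<Longrightarrow> y \<in> S \<Longrightarrow> x \<otimes>\<^bsub>A\<^esub> y \<in> S"
proof -
  have s1: "subgroup S (add_monoid A)" and s2: "subgroup S A" using S by (auto simp: subbrace_def)
  show "S \<subseteq> carrier A" using subgroup.subset[OF s1] by simp
  show "\<zero>\<^bsub>A\<^esub> \<in> S" using subgroup.one_closed[OF s1] by simp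
  show "\<And>x y. x \<in> S \<Longrightarrow> y \<in> S \<Longrightarrow> x \<oplus>\<^bsub>A\<^esub> y \<in> S" using subgroup.m_closed[OF s1] by simp
  show "\<And>x. x \<in> S \<Longrightarrow> \<ominus>\<^bsub>A\<^esub> x \<in> S" using subgroup.m_inv_closed[OF s1] by (simp add: a_inv_def)
  show "\<And>x y. x \<in> S \<Longrightarrow> y \<in> S \<Longrightarrow> x \<otimes>\<^bsub>A\<^esub> y \<in> S" using subgroup.m_closed[OF s2] by simp
qed

lemma subbrace_star: assumes A: "left_brace A" and S: "subbrace A S" and "x \<in> S" "y \<in> S"
  shows "brace_star A x y \<in> S"
  using subbrace_cl[OF A S] assms(3,4) by (simp add: brace_star_def a_minus_def)

lemma Bm_subbrace_gen: assumes m: "0 < m" shows "subbrace_gen (Bm m) (bvec m) = carrier (Bm m)"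
proof -
  have B: "left_brace (Bm m)" using Bm_brace[OF m] .
  have self: "subbrace (Bm m) (carrier (Bm m))"
    unfolding subbrace_def
    using group.subgroup_self[OF abelian_group.a_group[OF Bm_abelian]] group.subgroup_self[OF Bm_group[OF m]]
    by simp
  have "carrier (Bm m) \<subseteq> S" if S: "subbrace (Bm m) S" "bvec m \<in> S" for S
  proof (rule Bm_gen[OF m])
    note cl = subbrace_cl[OF B S(1)]
    show "S \<subseteq> {xs. length xs = m}" using cl(1) by simp
    show "\<And>x y. x \<in> S \<Longrightarrow> y \<in> S \<Longrightarrow> map2 (+) x y \<in> S" using cl(3) by simp
    show "\<And>x. x \<in> S \<Longrightarrow> map uminus x \<in> S" using cl(1,4) Bm_ainv by fastforce
    show "replicate m 0 \<in> S" using cl(2) by simp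
    show "bvec m \<in> S" by fact
    show "\<And>y. y \<in> S \<Longrightarrow> brace_star (Bm m) (bvec m) y \<in> S" using subbrace_star[OF B S(1)] S(2) by blast
  qed
  thus ?thesis using self m unfolding subbrace_gen_def by auto
qed

lemma universal:
  fixes A :: "'a ring"
  assumes m: "0 < m" and A: "left_brace A" and A3: "brace_right A 3 = {\<zero>\<^bsub>A\<^esub>}"
    and Am: "brace_left A (m + 1) = {\<zero>\<^bsub>A\<^esub>}" and a: "a \<in> carrier A"
  shows "\<exists>f. brace_hom (Bm m) A f \<and> f (bvec m) = a
               \<and> (\<forall>g. brace_hom (Bm m) A g \<and> g (bvec m) = a \<longrightarrow>
                      (\<forall>x\<in>carrier (Bm m). g x = f x))
               \<and> f ` carrier (Bm m) = subbrace_gen A a"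
proof -
  interpret lbrace A by (rule lbraceI[OF A])
  interpret lbrace3 A by unfold_locales (rule A3)
  interpret lbA A m a by unfold_locales (use Am a m in auto)
  define f where "f = Ev A a 0"
  have fh: "brace_hom (Bm m) A f" unfolding f_def by (rule f_hom)
  have fb: "f (bvec m) = a" unfolding f_def by (rule f_b)
  have B: "left_brace (Bm m)" by (rule Bm_brace[OF m])
  have BA: "abelian_group (Bm m)" by (rule Bm_abelian)
  have BG: "group (Bm m)" by (rule Bm_group[OF m])
  have AA: "abelian_group A" by unfold_locales
  have AG: "group A" by unfold_locales
  have hadd: "\<And>h x y. brace_hom (Bm m) A h \<Longrightarrow> length x = m \<Longrightarrow> length y = m \<Longrightarrow> h (map2 (+) x y) = h x \<oplus>\<^bsub>A\<^esub> h y"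
    by (simp add: brace_hom_def)
  have hcar: "\<And>h x. brace_hom (Bm m) A h \<Longrightarrow> length x = m \<Longrightarrow> h x \<in> carrier A"
    by (auto simp: brace_hom_def)
  have hneg: "\<And>h x. brace_hom (Bm m) A h \<Longrightarrow> length x = m \<Longrightarrow> h (map uminus x) = \<ominus>\<^bsub>A\<^esub> h x"
  proof -
    fix h and x :: "int list" assume h: "brace_hom (Bm m) A h" and x: "length x = m"
    show "h (map uminus x) = \<ominus>\<^bsub>A\<^esub> h x" using hom_neg[OF BA AA h, of x] x Bm_ainv[OF x] by simp
  qed
  have hzero: "\<And>h. brace_hom (Bm m) A h \<Longrightarrow> h (replicate m 0) = \<zero>\<^bsub>A\<^esub>"
  proof -
    fix h assume h: "brace_hom (Bm m) A h"
    show "h (replicate m 0) = \<zero>\<^bsub>A\<^esub>" using hom_zero[OF BA AA h] by simp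
  qed
  have hstar: "\<And>h y. brace_hom (Bm m) A h \<Longrightarrow> length y = m \<Longrightarrow> h (brace_star (Bm m) (bvec m) y) = brace_star A (h (bvec m)) (h y)"
    using hom_star[OF B A] m by simp
  have uniq: "\<forall>x\<in>carrier (Bm m). g x = f x" if g: "brace_hom (Bm m) A g" "g (bvec m) = a" for g
  proof -
    have "carrier (Bm m) \<subseteq> {x \<in> carrier (Bm m). g x = f x}"
    proof (rule Bm_gen[OF m])
      show "{x \<in> carrier (Bm m). g x = f x} \<subseteq> {xs. length xs = m}" by auto
      show "map2 (+) x y \<in> {x \<in> carrier (Bm m). g x = f x}"
        if "x \<in> {x \<in> carrier (Bm m). g x = f x}" "y \<in> {x \<in> carrier (Bm m). g x = f x}" for x y
        using that hadd[OF g(1)] hadd[OF fh] by simp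
      show "map uminus x \<in> {x \<in> carrier (Bm m). g x = f x}" if "x \<in> {x \<in> carrier (Bm m). g x = f x}" for x
        using that hneg[OF g(1)] hneg[OF fh] by simp
      show "replicate m 0 \<in> {x \<in> carrier (Bm m). g x = f x}" using hzero[OF g(1)] hzero[OF fh] by simp
      show "bvec m \<in> {x \<in> carrier (Bm m). g x = f x}" using g(2) fb m by simp
      show "brace_star (Bm m) (bvec m) y \<in> {x \<in> carrier (Bm m). g x = f x}" if "y \<in> {x \<in> carrier (Bm m). g x = f x}" for y
        using that hstar[OF g(1)] hstar[OF fh] g(2) fb m by simp
    qed
    thus ?thesis by auto
  qed
  have img1: "f ` carrier (Bm m) \<subseteq> subbrace_gen A a"
  proof
    fix z assume "z \<in> f ` carrier (Bm m)"
    then obtain x where x: "x \<in> carrier (Bm m)" "z = f x" by auto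
    show "z \<in> subbrace_gen A a" unfolding subbrace_gen_def
    proof (rule InterI)
      fix S assume "S \<in> {S. subbrace A S \<and> a \<in> S}"
      hence S: "subbrace A S" "a \<in> S" by auto
      note cl = subbrace_cl[OF A S(1)]
      have "carrier (Bm m) \<subseteq> {x \<in> carrier (Bm m). f x \<in> S}"
      proof (rule Bm_gen[OF m])
        show "{x \<in> carrier (Bm m). f x \<in> S} \<subseteq> {xs. length xs = m}" by auto
        show "map2 (+) x y \<in> {x \<in> carrier (Bm m). f x \<in> S}"
          if "x \<in> {x \<in> carrier (Bm m). f x \<in> S}" "y \<in> {x \<in> carrier (Bm m). f x \<in> S}" for x y
          using that hadd[OF fh] cl(3) by simp
        show "map uminus x \<in> {x \<in> carrier (Bm m). f x \<in> S}" if "x \<in> {x \<in> carrier (Bm m). f x \<in> S}" for x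
          using that hneg[OF fh] cl(4) by simp
        show "replicate m 0 \<in> {x \<in> carrier (Bm m). f x \<in> S}" using hzero[OF fh] cl(2) by simp
        show "bvec m \<in> {x \<in> carrier (Bm m). f x \<in> S}" using fb m S(2) by simp
        show "brace_star (Bm m) (bvec m) y \<in> {x \<in> carrier (Bm m). f x \<in> S}" if "y \<in> {x \<in> carrier (Bm m). f x \<in> S}" for y
          using that hstar[OF fh] fb m subbrace_star[OF A S(1) S(2)] by simp
      qed
      thus "z \<in> S" using x by auto
    qed
  qed
  have ne: "f ` carrier (Bm m) \<noteq> {}"
  proof -
    have "replicate m 0 \<in> carrier (Bm m)" by simp
    thus ?thesis by blast
  qed
  have sub: "subbrace A (f ` carrier (Bm m))"
    unfolding subbrace_def
  proof
    show "subgroup (f ` carrier (Bm m)) (add_monoid A)"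
    proof (rule group.subgroupI[OF a_group])
      show "f ` carrier (Bm m) \<subseteq> carrier (add_monoid A)" using hcar[OF fh] by auto
      show "f ` carrier (Bm m) \<noteq> {}" by (rule ne)
    next
      fix x y assume "x \<in> f ` carrier (Bm m)" "y \<in> f ` carrier (Bm m)"
      then obtain u v where u: "length u = m" "x = f u" and v: "length v = m" "y = f v" by auto
      have "x \<otimes>\<^bsub>add_monoid A\<^esub> y = f (map2 (+) u v)" using u v hadd[OF fh] by simp
      thus "x \<otimes>\<^bsub>add_monoid A\<^esub> y \<in> f ` carrier (Bm m)" using u v by auto
    next
      fix x assume "x \<in> f ` carrier (Bm m)"
      then obtain u where u: "length u = m" "x = f u" by auto
      have "inv\<^bsub>add_monoid A\<^esub> x = f (map uminus u)" using u hneg[OF fh] by (simp add: a_inv_def)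
      thus "inv\<^bsub>add_monoid A\<^esub> x \<in> f ` carrier (Bm m)" using u by auto
    qed
    show "subgroup (f ` carrier (Bm m)) A"
    proof (rule group.subgroupI[OF AG])
      show "f ` carrier (Bm m) \<subseteq> carrier A" using hcar[OF fh] by auto
      show "f ` carrier (Bm m) \<noteq> {}" by (rule ne)
    next
      fix x y assume "x \<in> f ` carrier (Bm m)" "y \<in> f ` carrier (Bm m)"
      then obtain u v where u: "u \<in> carrier (Bm m)" "x = f u" and v: "v \<in> carrier (Bm m)" "y = f v" by auto
      have "x \<otimes>\<^bsub>A\<^esub> y = f (u \<otimes>\<^bsub>Bm m\<^esub> v)" using u v fh by (simp add: brace_hom_def)
      moreover have "u \<otimes>\<^bsub>Bm m\<^esub> v \<in> carrier (Bm m)" using u v by simp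
      ultimately show "x \<otimes>\<^bsub>A\<^esub> y \<in> f ` carrier (Bm m)" by blast
    next
      fix x assume "x \<in> f ` carrier (Bm m)"
      then obtain u where u: "u \<in> carrier (Bm m)" "x = f u" by auto
      have "inv\<^bsub>A\<^esub> x = f (inv\<^bsub>Bm m\<^esub> u)" using u hom_inv[OF BG AG fh] by simp
      moreover have "inv\<^bsub>Bm m\<^esub> u \<in> carrier (Bm m)" using u(1) by (rule group.inv_closed[OF BG])
      ultimately show "inv\<^bsub>A\<^esub> x \<in> f ` carrier (Bm m)" by blast
    qed
  qed
  have bc: "bvec m \<in> carrier (Bm m)" using m by simp
  have "a \<in> f ` carrier (Bm m)" using image_eqI[of a f "bvec m", OF fb[symmetric] bc] .
  hence img2: "subbrace_gen A a \<subseteq> f ` carrier (Bm m)" using sub unfolding subbrace_gen_def by blast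
  have eq: "f ` carrier (Bm m) = subbrace_gen A a" using img1 img2 by (rule equalityI)
  show ?thesis
  proof (intro exI[of _ f] conjI allI impI)
    show "brace_hom (Bm m) A f" by (rule fh)
    show "f (bvec m) = a" by (rule fb)
    show "f ` carrier (Bm m) = subbrace_gen A a" by (rule eq)
    fix g assume gg: "brace_hom (Bm m) A g \<and> g (bvec m) = a"
    show "\<forall>x\<in>carrier (Bm m). g x = f x" by (rule uniq) (use gg in simp_all)
  qed
qed

theorem theoremE:
  fixes m :: nat
  assumes "m \<ge> 2"
  shows "left_brace (Bm m)
    \<and> brace_right (Bm m) 3 = {\<zero>\<^bsub>Bm m\<^esub>}
    \<and> brace_left (Bm m) (m + 1) = {\<zero>\<^bsub>Bm m\<^esub>}
    \<and> brace_left (Bm m) m \<noteq> {\<zero>\<^bsub>Bm m\<^esub>}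
    \<and> subbrace_gen (Bm m) (bvec m) = carrier (Bm m)
    \<and> (\<forall>(A :: 'a ring) a.
          left_brace A \<and> brace_right A 3 = {\<zero>\<^bsub>A\<^esub>} \<and> brace_left A (m + 1) = {\<zero>\<^bsub>A\<^esub>}
          \<and> a \<in> carrier A \<longrightarrow>
          (\<exists>f. brace_hom (Bm m) A f \<and> f (bvec m) = a
               \<and> (\<forall>g. brace_hom (Bm m) A g \<and> g (bvec m) = a \<longrightarrow>
                      (\<forall>x\<in>carrier (Bm m). g x = f x))
               \<and> f ` carrier (Bm m) = subbrace_gen A a))"
proof -
  have m: "0 < m" using assms by simp
  show ?thesis
  proof (intro conjI allI impI)
    show "left_brace (Bm m)" by (rule Bm_brace[OF m])
    show "brace_right (Bm m) 3 = {\<zero>\<^bsub>Bm m\<^esub>}" by (rule Bm_right3[OF m])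
    show "brace_left (Bm m) (m + 1) = {\<zero>\<^bsub>Bm m\<^esub>}" by (rule Bm_left_top[OF m])
    show "brace_left (Bm m) m \<noteq> {\<zero>\<^bsub>Bm m\<^esub>}" by (rule Bm_left_ne[OF m])
    show "subbrace_gen (Bm m) (bvec m) = carrier (Bm m)" by (rule Bm_subbrace_gen[OF m])
    fix A :: "'a ring" and a
    assume H: "left_brace A \<and> brace_right A 3 = {\<zero>\<^bsub>A\<^esub>} \<and> brace_left A (m + 1) = {\<zero>\<^bsub>A\<^esub>} \<and> a \<in> carrier A"
    from H have h1: "left_brace A" and h2: "brace_right A 3 = {\<zero>\<^bsub>A\<^esub>}"
      and h3: "brace_left A (m + 1) = {\<zero>\<^bsub>A\<^esub>}" and h4: "a \<in> carrier A" by auto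
    show "\<exists>f. brace_hom (Bm m) A f \<and> f (bvec m) = a
               \<and> (\<forall>g. brace_hom (Bm m) A g \<and> g (bvec m) = a \<longrightarrow>
                      (\<forall>x\<in>carrier (Bm m). g x = f x))
               \<and> f ` carrier (Bm m) = subbrace_gen A a"
      by (rule universal[OF m h1 h2 h3 h4])
  qed
qed

end
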